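(* Let $f,g\in\mathbb{Z}[x,y]$ have no common non-constant factor, let $R^{(y)}=\operatorname{res}(f,g;y)$ and $R^{(x)}=\operatorname{res}(f,g;x)$, and let $\alpha$ and $\beta$ be arbitrary real roots of $R^{(y)}$ and $R^{(x)}$, respectively, with discs $\Delta(\alpha),\Delta(\beta)$ and bounds $L(\alpha),L(\beta)$ constructed as in the context. Then: (1) the polydisc $\Delta(\alpha,\beta):=\Delta(\alpha)\times\Delta(\beta)\subset\mathbb{C}^2$ contains at most one common complex zero of $f$ and $g$; if it contains one, then this zero is real and equals $(\alpha,\beta)$; (2) for every point $(z_1,z_2)$ on the boundary of $\Delta(\alpha,\beta)$, $|R^{(y)}(z_1)|>L(\alpha)$ if $z_1\in\partial\Delta(\alpha)$, and $|R^{(x)}(z_2)|>L(\beta)$ if $z_2\in\partial\Delta(\beta)$.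
   Context: Notation: for an interval $I=(a,b)\subset\mathbb{R}$, $m_I=(a+b)/2$, $r_I=(b-a)/2$; $\Delta_r(m)=\{z\in\mathbb{C}:|z-m|<r\}$. For $p\in\mathbb{R}[x]$ and reals $m,r,K$, $T^p_K(m,r)$ means $|p(m)|-K\sum_{k\ge1}\left|\frac{p^{(k)}(m)}{k!}\right|r^k>0$. Construction: write $R^{(y)}=\prod_{i=1}^{\deg R^{(y)}} r_i^{\,i}$ with $r_i\in\mathbb{Z}[x]$ square-free and pairwise coprime. If $\alpha$ is a root of $r_{i_0}$, let $I=I(\alpha)$ be an open real interval containing $\alpha$ such that $T^{(r_{i_0})'}_{3/2}(m_I,8r_I)$ holds and $T^{r_i}_1(m_I,8r_I)$ holds for all $i\neq i_0$; set $\Delta(\alpha):=\Delta_{2r_I}(m_I)$ and $L(\alpha):=2^{-i_0-\deg R^{(y)}}|R^{(y)}(m_I-2r_I)|$. $\Delta(\beta)$, $L(\beta)$ are constructed identically from $R^{(x)}$ and its square-free factorization. *)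

theory Defs
  imports "HOL-Analysis.Analysis" "HOL-Computational_Algebra.Computational_Algebra"
    "Subresultants.Resultant_Prelim"
begin

text \<open>Bivariate integer polynomials f(x,y) are represented as int poly poly:
  the outer variable is y, the coefficients are polynomials in x.\<close>

definition eval2 :: "int poly poly \<Rightarrow> complex \<Rightarrow> complex \<Rightarrow> complex" where
  "eval2 f z1 z2 = poly (map_poly (\<lambda>c. poly (map_poly of_int c) z1) f) z2"

definition swap_xy :: "int poly poly \<Rightarrow> int poly poly" where
  "swap_xy p = (\<Sum>i\<le>degree p. \<Sum>j\<le>degree (coeff p i). monom (monom (coeff (coeff p i) j) i) j)"

definition res_y :: "int poly poly \<Rightarrow> int poly poly \<Rightarrow> int poly" where
  "res_y f g = resultant f g"
definition res_x :: "int poly poly \<Rightarrow> int poly poly \<Rightarrow> int poly" where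
  "res_x f g = resultant (swap_xy f) (swap_xy g)"

definition T_test :: "int poly \<Rightarrow> real \<Rightarrow> real \<Rightarrow> real \<Rightarrow> bool" where
  "T_test p K m r \<longleftrightarrow>
     \<bar>poly (map_poly of_int p) m\<bar>
       - K * (\<Sum>k\<in>{1..degree p}. \<bar>poly ((pderiv ^^ k) (map_poly of_int p)) m / fact k\<bar> * r ^ k) > 0"

definition sqf_factorization :: "int poly \<Rightarrow> (nat \<Rightarrow> int poly) \<Rightarrow> bool" where
  "sqf_factorization R rs \<longleftrightarrow>
     R = (\<Prod>i\<in>{1..degree R}. rs i ^ i) \<and>
     (\<forall>i\<in>{1..degree R}. squarefree (rs i)) \<and>
     (\<forall>i\<in>{1..degree R}. \<forall>j\<in>{1..degree R}. i \<noteq> j \<longrightarrow> coprime (rs i) (rs j))"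

definition admissible_interval ::
  "int poly \<Rightarrow> (nat \<Rightarrow> int poly) \<Rightarrow> nat \<Rightarrow> real \<Rightarrow> real \<Rightarrow> real \<Rightarrow> bool" where
  "admissible_interval R rs i0 \<alpha> a b \<longleftrightarrow>
     a < \<alpha> \<and> \<alpha> < b \<and>
     T_test (pderiv (rs i0)) (3/2) ((a+b)/2) (8 * ((b-a)/2)) \<and>
     (\<forall>i\<in>{1..degree R}. i \<noteq> i0 \<longrightarrow> T_test (rs i) 1 ((a+b)/2) (8 * ((b-a)/2)))"

definition iso_disc :: "real \<Rightarrow> real \<Rightarrow> complex set" where
  "iso_disc a b = ball (complex_of_real ((a+b)/2)) (2 * ((b-a)/2))"

definition iso_bound :: "int poly \<Rightarrow> nat \<Rightarrow> real \<Rightarrow> real \<Rightarrow> real" where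
  "iso_bound R i0 a b =
     inverse (2 ^ (i0 + degree R)) * \<bar>poly (map_poly of_int R) ((a+b)/2 - 2 * ((b-a)/2))\<bar>"

end

theory Submission
  imports Defs
begin


lemma higher_pderiv_X_mult:
  fixes q :: "'a::field_char_0 poly"
  shows "(pderiv^^Suc k) ([:0,1:] * q) = [:0,1:] * (pderiv^^Suc k) q + Polynomial.smult (of_nat (Suc k)) ((pderiv^^k) q)"
proof (induction k)
  case 0
  then show ?case by (simp add: pderiv_mult pderiv_pCons)
next
  case (Suc k)
  define r where "r = (pderiv^^Suc k) q"
  have "(pderiv^^Suc (Suc k)) ([:0,1:] * q) = pderiv ((pderiv^^Suc k) ([:0,1:] * q))" by simp
  also have "\<dots> = pderiv ([:0,1:] * r) + Polynomial.smult (of_nat (Suc k)) r"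
    unfolding Suc r_def by (simp only: pderiv_add pderiv_smult funpow.simps o_def)
  also have "pderiv ([:0,1:] * r) = r + [:0,1:] * pderiv r"
    by (simp add: pderiv_mult pderiv_pCons)
  also have "r + [:0,1:] * pderiv r + Polynomial.smult (of_nat (Suc k)) r
     = [:0,1:] * pderiv r + Polynomial.smult (of_nat (Suc (Suc k))) r"
  proof -
    have "Polynomial.smult (of_nat (Suc (Suc k))) r = r + Polynomial.smult (of_nat (Suc k)) r"
      by (simp only: of_nat_Suc[of "Suc k"] smult_add_left smult_1_left)
    then show ?thesis by (simp only: add_ac)
  qed
  finally show ?case unfolding r_def by simp
qed

lemma taylor_poly:
  fixes p :: "'a::field_char_0 poly"
  shows "degree p \<le> N \<Longrightarrow> poly p (m + h) = (\<Sum>k\<le>N. poly ((pderiv^^k) p) m / fact k * h^k)"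
proof (induction p arbitrary: N rule: pCons_induct)
  case 0
  then show ?case by simp
next
  case (pCons a q)
  show ?case
  proof (cases "q = 0")
    case True
    have "(\<Sum>k\<le>N. poly ((pderiv^^k) [:a:]) m / fact k * h^k) = (\<Sum>k\<in>{0}. poly ((pderiv^^k) [:a:]) m / fact k * h^k)"
    proof (rule sum.mono_neutral_right)
      show "\<forall>i\<in>{..N} - {0}. poly ((pderiv ^^ i) [:a:]) m / fact i * h ^ i = 0"
      proof
        fix i assume "i \<in> {..N} - {0}"
        then obtain j where "i = Suc j" by (cases i) auto
        then show "poly ((pderiv ^^ i) [:a:]) m / fact i * h ^ i = 0"
          by (simp only: funpow_Suc_right o_def pderiv_pCons) simp
      qed
    qed auto
    then show ?thesis using True by simp
  next
    case False
    with pCons.prems obtain M where N: "N = Suc M" and dq: "degree q \<le> M"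
      by (cases N) auto
    have p: "pCons a q = [:a:] + [:0,1:] * q" by (simp add: pCons_eq_iff)  
    have d: "(pderiv^^Suc k) (pCons a q) = [:0,1:] * (pderiv^^Suc k) q + Polynomial.smult (of_nat (Suc k)) ((pderiv^^k) q)" for k
      unfolding p higher_pderiv_add higher_pderiv_X_mult
      by (simp only: funpow_Suc_right o_def pderiv_pCons) simp
    have "(\<Sum>k\<le>N. poly ((pderiv^^k) (pCons a q)) m / fact k * h^k)
       = poly (pCons a q) m + (\<Sum>k\<le>M. poly ((pderiv^^Suc k) (pCons a q)) m / fact (Suc k) * h^Suc k)"
      unfolding N sum.atMost_Suc_shift by simp
    also have "(\<Sum>k\<le>M. poly ((pderiv^^Suc k) (pCons a q)) m / fact (Suc k) * h^Suc k)
       = (\<Sum>k\<le>M. m * (poly ((pderiv^^Suc k) q) m / fact (Suc k) * h^Suc k))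
         + h * (\<Sum>k\<le>M. poly ((pderiv^^k) q) m / fact k * h^k)"
      unfolding sum_distrib_left sum.distrib[symmetric]
    proof (rule sum.cong)
      fix k assume "k \<in> {..M}"
      have f: "of_nat (Suc k) / fact (Suc k) = (1 / fact k :: 'a)"
        by (simp add: fact_Suc del: of_nat_Suc)
      have "poly ((pderiv^^Suc k) (pCons a q)) m / fact (Suc k) * h^Suc k
         = m * (poly ((pderiv^^Suc k) q) m / fact (Suc k) * h^Suc k)
           + (of_nat (Suc k) / fact (Suc k)) * poly ((pderiv^^k) q) m * h^Suc k"
        unfolding d by (simp add: algebra_simps add_divide_distrib del: of_nat_Suc)
      also have "\<dots> = m * (poly ((pderiv^^Suc k) q) m / fact (Suc k) * h^Suc k)
           + h * (poly ((pderiv^^k) q) m / fact k * h^k)"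
        unfolding f by simp
      finally show "poly ((pderiv^^Suc k) (pCons a q)) m / fact (Suc k) * h^Suc k
         = m * (poly ((pderiv^^Suc k) q) m / fact (Suc k) * h^Suc k)
           + h * (poly ((pderiv^^k) q) m / fact k * h^k)" .
    qed simp
    also have "poly (pCons a q) m = a + m * poly q m" by simp
    also have "(\<Sum>k\<le>M. poly ((pderiv^^k) q) m / fact k * h^k) = poly q (m + h)"
      using pCons.IH[OF dq] by simp
    also have "(\<Sum>k\<le>M. m * (poly ((pderiv^^Suc k) q) m / fact (Suc k) * h^Suc k))
       = m * poly q (m + h) - m * poly q m"
    proof -
      have "poly q (m + h) = (\<Sum>k\<le>N. poly ((pderiv^^k) q) m / fact k * h^k)"
        using pCons.IH[of N] dq N by simp
      also have "\<dots> = poly q m + (\<Sum>k\<le>M. poly ((pderiv^^Suc k) q) m / fact (Suc k) * h^Suc k)"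
        unfolding N sum.atMost_Suc_shift by simp
      finally show ?thesis by (simp add: sum_distrib_left algebra_simps)
    qed
    finally show ?thesis by (simp add: algebra_simps)
  qed
qed

lemma sum_split0: fixes N :: nat shows "(\<Sum>k\<le>N. f k) = f 0 + (\<Sum>k\<in>{1..N}. f k)"
proof -
  have "{..N} = insert 0 {1..N}" by auto
  then show ?thesis by simp
qed

lemma pow_2r_le: "r \<ge> 0 \<Longrightarrow> k \<ge> 1 \<Longrightarrow> (2*r)^k \<le> (8*r)^k / (4::real)"
proof -
  assume r: "r \<ge> 0" and k: "k \<ge> 1"
  have e: "8*r = 4*(2*r)" by simp
  have "(8*r)^k = 4^k * (2*r)^k" unfolding e by (rule power_mult_distrib)
  moreover have "4 * (2*r)^k \<le> 4^k * (2*r)^k"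
  proof (rule mult_right_mono)
    show "(4::real) \<le> 4^k" using power_increasing[of 1 k "4::real"] k by simp
    show "0 \<le> (2*r)^k" using r by simp
  qed
  ultimately have "(2*r)^k * 4 \<le> (8*r)^k" by linarith
  then show ?thesis by (simp only: pos_le_divide_eq[of 4] zero_less_numeral)
qed

lemma nonroot_est:
  fixes P :: "complex poly" and m z :: complex and r :: real
  assumes r: "r \<ge> 0" and z: "cmod (z - m) \<le> 2*r"
  shows "cmod (poly P z - poly P m) \<le> (\<Sum>k\<in>{1..degree P}. cmod (poly ((pderiv^^k) P) m / fact k) * (8*r)^k) / 4"
proof -
  have "poly P z = poly P (m + (z - m))" by simp
  also have "\<dots> = (\<Sum>k\<le>degree P. poly ((pderiv^^k) P) m / fact k * (z - m)^k)"
    by (rule taylor_poly) simp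
  also have "\<dots> = poly P m + (\<Sum>k\<in>{1..degree P}. poly ((pderiv^^k) P) m / fact k * (z - m)^k)"
    by (simp add: sum_split0)
  finally have "poly P z - poly P m = (\<Sum>k\<in>{1..degree P}. poly ((pderiv^^k) P) m / fact k * (z - m)^k)"
    by simp
  then have "cmod (poly P z - poly P m) \<le> (\<Sum>k\<in>{1..degree P}. cmod (poly ((pderiv^^k) P) m / fact k * (z - m)^k))"
    by (simp add: norm_sum)
  also have "\<dots> \<le> (\<Sum>k\<in>{1..degree P}. cmod (poly ((pderiv^^k) P) m / fact k) * (8*r)^k / 4)"
  proof (rule sum_mono)
    fix k assume k: "k \<in> {1..degree P}"
    have "cmod ((z - m)^k) \<le> (2*r)^k" unfolding norm_power
      by (rule power_mono[OF z]) simp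
    also have "\<dots> \<le> (8*r)^k / 4" using pow_2r_le[OF r] k by auto
    finally have "cmod ((z - m)^k) \<le> (8*r)^k / 4" .
    then have "cmod (poly ((pderiv^^k) P) m / fact k) * cmod ((z - m)^k) \<le> cmod (poly ((pderiv^^k) P) m / fact k) * ((8*r)^k / 4)"
      by (rule mult_left_mono) simp
    then show "cmod (poly ((pderiv^^k) P) m / fact k * (z - m)^k) \<le> cmod (poly ((pderiv^^k) P) m / fact k) * (8*r)^k / 4"
      unfolding norm_mult by simp
  qed
  also have "\<dots> = (\<Sum>k\<in>{1..degree P}. cmod (poly ((pderiv^^k) P) m / fact k) * (8*r)^k) / 4"
    by (simp add: sum_divide_distrib)
  finally show ?thesis .
qed

lemma root_est:
  fixes P :: "complex poly" and m z \<alpha> :: complex and r :: real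
  assumes r: "r \<ge> 0" and deg: "degree P \<ge> 1" and root: "poly P \<alpha> = 0"
    and a: "cmod (\<alpha> - m) \<le> 2*r" and z: "cmod (z - m) \<le> 2*r"
  shows "cmod (poly P z - poly (pderiv P) m * (z - \<alpha>))
     \<le> cmod (z - \<alpha>) * ((\<Sum>j\<in>{1..degree (pderiv P)}. cmod (poly ((pderiv^^j) (pderiv P)) m / fact j) * (8*r)^j) / 4)"
proof -
  define N where "N = degree P"
  define u where "u = z - m"
  define v where "v = \<alpha> - m"
  define c where "c k = poly ((pderiv^^k) P) m / fact k" for k
  define d where "d j = poly ((pderiv^^j) (pderiv P)) m / fact j" for j
  define G where "G k = (\<Sum>i<k. v^(k - Suc i) * u^i)" for k
  obtain M where NM: "N = Suc M" using deg unfolding N_def by (cases "degree P") auto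
  have dP: "degree (pderiv P) = M" using NM N_def by (simp add: degree_pderiv)
  have tz: "poly P z = (\<Sum>k\<le>N. c k * u^k)"
    using taylor_poly[of P N m u] unfolding N_def c_def u_def by simp
  have ta: "0 = (\<Sum>k\<le>N. c k * v^k)"
    using taylor_poly[of P N m v] root unfolding N_def c_def v_def by simp
  have "poly P z = (\<Sum>k\<le>N. c k * (u^k - v^k))"
    using tz ta by (simp add: sum_subtractf right_diff_distrib)
  also have "\<dots> = (z - \<alpha>) * (\<Sum>k\<le>N. c k * G k)"
    unfolding power_diff_sumr2 G_def sum_distrib_left
    by (rule sum.cong) (auto simp: u_def v_def sum_distrib_left mult_ac)
  also have "(\<Sum>k\<le>N. c k * G k) = (\<Sum>k\<in>{1..N}. c k * G k)"
    by (simp add: sum_split0 G_def)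
  also have "\<dots> = (\<Sum>j\<in>{0..M}. c (Suc j) * G (Suc j))"
    unfolding NM One_nat_def sum.shift_bounds_cl_Suc_ivl by simp
  also have "\<dots> = (\<Sum>j\<le>M. d j * G (Suc j) / of_nat (Suc j))"
    unfolding atLeast0AtMost
  proof (rule sum.cong)
    fix j assume "j \<in> {..M}"
    have "(pderiv^^Suc j) P = (pderiv^^j) (pderiv P)" by (simp only: funpow_Suc_right o_def)
    then show "c (Suc j) * G (Suc j) = d j * G (Suc j) / of_nat (Suc j)"
      unfolding c_def d_def by (simp add: fact_Suc field_simps del: of_nat_Suc)
  qed simp
  also have "\<dots> = poly (pderiv P) m + (\<Sum>j\<in>{1..M}. d j * G (Suc j) / of_nat (Suc j))"
    by (simp add: sum_split0 d_def G_def)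
  finally have eq: "poly P z - poly (pderiv P) m * (z - \<alpha>) = (z - \<alpha>) * (\<Sum>j\<in>{1..M}. d j * G (Suc j) / of_nat (Suc j))"
    by (simp add: algebra_simps)
  have bnd: "cmod (\<Sum>j\<in>{1..M}. d j * G (Suc j) / of_nat (Suc j)) \<le> (\<Sum>j\<in>{1..M}. cmod (d j) * (8*r)^j / 4)"
  proof -
    have "cmod (\<Sum>j\<in>{1..M}. d j * G (Suc j) / of_nat (Suc j)) \<le> (\<Sum>j\<in>{1..M}. cmod (d j * G (Suc j) / of_nat (Suc j)))"
      by (rule norm_sum)
    also have "\<dots> \<le> (\<Sum>j\<in>{1..M}. cmod (d j) * (8*r)^j / 4)"
    proof (rule sum_mono)
      fix j assume j: "j \<in> {1..M}"
      have "cmod (G (Suc j)) \<le> (\<Sum>i<Suc j. cmod (v^(Suc j - Suc i) * u^i))"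
        unfolding G_def by (rule norm_sum)
      also have "\<dots> \<le> (\<Sum>i<Suc j. (2*r)^j)"
      proof (rule sum_mono)
        fix i assume i: "i \<in> {..<Suc j}"
        have "cmod (v^(Suc j - Suc i) * u^i) = cmod v ^ (j - i) * cmod u ^ i"
          by (simp add: norm_mult norm_power)
        also have "\<dots> \<le> (2*r)^(j - i) * (2*r)^i"
          using a z unfolding u_def v_def
          by (intro mult_mono power_mono) (auto simp: r)
        also have "\<dots> = (2*r)^j" using i by (simp only: power_add[symmetric]) simp
        finally show "cmod (v^(Suc j - Suc i) * u^i) \<le> (2*r)^j" .
      qed
      also have "\<dots> = of_nat (Suc j) * (2*r)^j" by simp
      finally have g: "cmod (G (Suc j)) \<le> of_nat (Suc j) * (2*r)^j" .
      have "cmod (d j * G (Suc j) / of_nat (Suc j)) = cmod (d j) * (cmod (G (Suc j)) / of_nat (Suc j))"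
        by (simp add: norm_mult norm_divide del: of_nat_Suc)
      also have "\<dots> \<le> cmod (d j) * (2*r)^j"
        by (rule mult_left_mono) (use g in \<open>auto simp: divide_le_eq mult.commute\<close>)
      also have "\<dots> \<le> cmod (d j) * ((8*r)^j / 4)"
        by (rule mult_left_mono) (use pow_2r_le[OF r] j in auto)
      finally show "cmod (d j * G (Suc j) / of_nat (Suc j)) \<le> cmod (d j) * (8*r)^j / 4" by simp
    qed
    finally show ?thesis .
  qed
  show ?thesis
    unfolding eq norm_mult dP
    using bnd by (intro mult_left_mono) (auto simp: d_def sum_divide_distrib)
qed

lemma nonroot_facts:
  fixes P :: "complex poly" and m z w :: complex and r :: real
  assumes r: "r \<ge> 0"
    and T: "cmod (poly P m) - (\<Sum>k\<in>{1..degree P}. cmod (poly ((pderiv^^k) P) m / fact k) * (8*r)^k) > 0"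
    and z: "cmod (z - m) \<le> 2*r"
  shows "poly P z \<noteq> 0"
    and "cmod (w - m) \<le> 2*r \<Longrightarrow> cmod (poly P z) \<ge> (1/2)^degree P * cmod (poly P w)"
proof -
  define S where "S = (\<Sum>k\<in>{1..degree P}. cmod (poly ((pderiv^^k) P) m / fact k) * (8*r)^k)"
  have S0: "S \<ge> 0" unfolding S_def using r by (intro sum_nonneg) auto
  have ez: "cmod (poly P z - poly P m) \<le> S / 4" using nonroot_est[OF r z] unfolding S_def .
  have Tq: "cmod (poly P m) > S" using T unfolding S_def by simp
  have lz: "cmod (poly P z) \<ge> cmod (poly P m) - S / 4"
    using ez norm_triangle_ineq2[of "poly P m" "poly P z"] by (simp add: norm_minus_commute)
  then show "poly P z \<noteq> 0" using Tq S0 by auto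
  assume w: "cmod (w - m) \<le> 2*r"
  have ew: "cmod (poly P w - poly P m) \<le> S / 4" using nonroot_est[OF r w] unfolding S_def .
  have uw: "cmod (poly P w) \<le> cmod (poly P m) + S / 4"
    using ew norm_triangle_ineq2[of "poly P w" "poly P m"] by simp
  show "cmod (poly P z) \<ge> (1/2)^degree P * cmod (poly P w)"
  proof (cases "degree P = 0")
    case True
    then have "S = 0" unfolding S_def by simp
    then have "poly P z = poly P m" "poly P w = poly P m" using ez ew by auto
    then show ?thesis using True by simp
  next
    case False
    have c: "(1/2::real)^degree P \<le> (1/2)^1" using False by (intro power_decreasing) auto
    have "(1/2)^degree P * cmod (poly P w) \<le> (1/2) * cmod (poly P w)"
      using c by (intro mult_right_mono) auto
    also have "\<dots> \<le> cmod (poly P m) - S / 4" using uw Tq S0 by linarith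
    finally show ?thesis using lz by linarith
  qed
qed

lemma root_facts:
  fixes P :: "complex poly" and m \<alpha> :: complex and r :: real
  assumes r: "r > 0" and deg: "degree P \<ge> 1" and root: "poly P \<alpha> = 0"
    and a: "cmod (\<alpha> - m) < r"
    and T: "cmod (poly (pderiv P) m) - 3/2 * (\<Sum>j\<in>{1..degree (pderiv P)}. cmod (poly ((pderiv^^j) (pderiv P)) m / fact j) * (8*r)^j) > 0"
  shows "cmod (z - m) \<le> 2*r \<Longrightarrow> poly P z = 0 \<Longrightarrow> z = \<alpha>"
    and "cmod (z - m) = 2*r \<Longrightarrow> cmod (w - m) \<le> 2*r \<Longrightarrow> cmod (poly P z) > (1/2)^Suc (degree P) * cmod (poly P w)"
proof -
  define S where "S = (\<Sum>j\<in>{1..degree (pderiv P)}. cmod (poly ((pderiv^^j) (pderiv P)) m / fact j) * (8*r)^j)"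
  define D where "D = cmod (poly (pderiv P) m)"
  have S0: "S \<ge> 0" unfolding S_def using r by (intro sum_nonneg) auto
  have TD: "D > 3/2 * S" using T unfolding S_def D_def by simp
  have a2: "cmod (\<alpha> - m) \<le> 2*r" using a r by simp
  have est: "cmod (poly P x - poly (pderiv P) m * (x - \<alpha>)) \<le> cmod (x - \<alpha>) * (S / 4)"
    if "cmod (x - m) \<le> 2*r" for x
    using root_est[OF _ deg root a2 that] r unfolding S_def by simp
  have low: "cmod (poly P x) \<ge> cmod (x - \<alpha>) * (D - S / 4)" if "cmod (x - m) \<le> 2*r" for x
  proof -
    have "cmod (poly (pderiv P) m * (x - \<alpha>)) - cmod (poly P x) \<le> cmod (poly P x - poly (pderiv P) m * (x - \<alpha>))"
      using norm_triangle_ineq2[of "poly (pderiv P) m * (x - \<alpha>)" "poly P x"] by (simp add: norm_minus_commute)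
    then show ?thesis using est[OF that] unfolding D_def norm_mult by (simp add: algebra_simps)
  qed
  have up: "cmod (poly P x) \<le> cmod (x - \<alpha>) * (D + S / 4)" if "cmod (x - m) \<le> 2*r" for x
  proof -
    have "cmod (poly P x) - cmod (poly (pderiv P) m * (x - \<alpha>)) \<le> cmod (poly P x - poly (pderiv P) m * (x - \<alpha>))"
      by (rule norm_triangle_ineq2)
    then show ?thesis using est[OF that] unfolding D_def norm_mult by (simp add: algebra_simps)
  qed
  show "z = \<alpha>" if z: "cmod (z - m) \<le> 2*r" and pz: "poly P z = 0"
  proof (rule ccontr)
    assume "z \<noteq> \<alpha>"
    then have "cmod (z - \<alpha>) > 0" by simp
    moreover have "D - S / 4 > 0" using TD S0 by linarith
    ultimately have "cmod (z - \<alpha>) * (D - S / 4) > 0" by simp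
    then show False using low[OF z] pz by simp
  qed
  assume z: "cmod (z - m) = 2*r" and w: "cmod (w - m) \<le> 2*r"
  have zx: "cmod (z - \<alpha>) > r"
    using norm_triangle_ineq2[of "z - m" "\<alpha> - m"] z a by (simp add: algebra_simps)
  have wx: "cmod (w - \<alpha>) \<le> 3 * r"
    using norm_triangle_ineq[of "w - m" "m - \<alpha>"] w a by (simp add: norm_minus_commute)
  have DS: "D - S / 4 > 0" using TD S0 by linarith
  have l1: "cmod (poly P z) > r * (D - S / 4)"
  proof -
    have "r * (D - S / 4) < cmod (z - \<alpha>) * (D - S / 4)" using zx DS by simp
    also have "\<dots> \<le> cmod (poly P z)" using low z by simp
    finally show ?thesis .
  qed
  have u1: "cmod (poly P w) \<le> 3 * r * (D + S / 4)"
  proof -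
    have "cmod (poly P w) \<le> cmod (w - \<alpha>) * (D + S / 4)" using up[OF w] .
    also have "\<dots> \<le> 3 * r * (D + S / 4)" using wx S0 TD by (intro mult_right_mono) auto
    finally show ?thesis .
  qed
  have key: "(1/2)^Suc (degree P) * (3 * r * (D + S / 4)) \<le> r * (D - S / 4)"
  proof (cases "degree P = 1")
    case True
    then have "S = 0" unfolding S_def by (simp add: degree_pderiv)
    then show ?thesis using True r TD by simp
  next
    case False
    then have "degree P \<ge> 2" using deg by simp
    then have c: "(1/2::real)^Suc (degree P) \<le> (1/2)^3" by (intro power_decreasing) auto
    have pos: "3 * r * (D + S / 4) \<ge> 0" using r S0 TD by auto
    have "(1/2)^Suc (degree P) * (3 * r * (D + S / 4)) \<le> (1/2)^3 * (3 * r * (D + S / 4))"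
      using c pos by (rule mult_right_mono)
    also have "\<dots> \<le> r * (D - S / 4)"
    proof -
      have "(1/2::real)^3 * (3 * (D + S / 4)) \<le> D - S / 4" using TD S0 by (simp add: power3_eq_cube; linarith)
      then have "r * ((1/2::real)^3 * (3 * (D + S / 4))) \<le> r * (D - S / 4)" using r by (intro mult_left_mono) auto
      then show ?thesis by (simp add: algebra_simps)
    qed
    finally show ?thesis .
  qed
  have "(1/2)^Suc (degree P) * cmod (poly P w) \<le> (1/2)^Suc (degree P) * (3 * r * (D + S / 4))"
    using u1 by (intro mult_left_mono) auto
  also note key
  finally show "cmod (poly P z) > (1/2)^Suc (degree P) * cmod (poly P w)" using l1 by linarith
qed

lemma pc_real: "(of_int_poly p :: complex poly) = map_poly of_real (of_int_poly p)"
  by (simp add: map_poly_map_poly o_def)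

lemma higher_pderiv_of_real: "(pderiv^^k) (map_poly of_real P :: complex poly) = map_poly of_real ((pderiv^^k) P)"
  by (induction k) (simp_all add: of_real_hom.map_poly_pderiv)

lemma poly_pc_real: "poly (of_int_poly p :: complex poly) (of_real x) = of_real (poly (of_int_poly p) x)"
  unfolding pc_real by (rule of_real_hom.poly_map_poly)

lemma T_complex:
  "T_test p K m r \<longleftrightarrow>
    cmod (poly (of_int_poly p :: complex poly) (of_real m))
      - K * (\<Sum>k\<in>{1..degree (of_int_poly p :: complex poly)}.
          cmod (poly ((pderiv^^k) (of_int_poly p :: complex poly)) (of_real m) / fact k) * r^k) > 0"
proof -
  have e: "cmod (poly ((pderiv^^k) (of_int_poly p :: complex poly)) (of_real m) / fact k)
        = \<bar>poly ((pderiv^^k) (of_int_poly p :: real poly)) m / fact k\<bar>" for k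
  proof -
    have "poly ((pderiv^^k) (of_int_poly p :: complex poly)) (of_real m) / fact k
        = of_real (poly ((pderiv^^k) (of_int_poly p :: real poly)) m / fact k)"
      unfolding pc_real higher_pderiv_of_real of_real_hom.poly_map_poly by simp
    then show ?thesis by (simp only: norm_of_real)
  qed
  show ?thesis unfolding T_test_def e poly_pc_real norm_of_real
    by (simp add: of_int_hom.degree_map_poly_hom)
qed

lemma prod_strict:
  fixes x y :: "nat \<Rightarrow> real"
  assumes fin: "finite I" and i0: "i0 \<in> I" "i0 \<ge> 1"
    and y0: "\<And>i. i \<in> I \<Longrightarrow> 0 \<le> y i"
    and le: "\<And>i. i \<in> I \<Longrightarrow> i \<noteq> i0 \<Longrightarrow> y i \<le> x i \<and> 0 < x i"
    and lt: "y i0 < x i0"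
  shows "(\<Prod>i\<in>I. y i ^ i) < (\<Prod>i\<in>I. x i ^ i)"
proof -
  have A: "(\<Prod>i\<in>I - {i0}. y i ^ i) \<le> (\<Prod>i\<in>I - {i0}. x i ^ i)"
    using y0 le by (intro prod_mono) (auto intro: power_mono)
  have A0: "0 \<le> (\<Prod>i\<in>I - {i0}. y i ^ i)" using y0 by (intro prod_nonneg) auto
  have Apos: "0 < (\<Prod>i\<in>I - {i0}. x i ^ i)" using le by (intro prod_pos) auto
  have B: "y i0 ^ i0 < x i0 ^ i0" using lt y0[OF i0(1)] i0(2) by (intro power_strict_mono) auto
  have B0: "0 \<le> y i0 ^ i0" using y0[OF i0(1)] by simp
  have "y i0 ^ i0 * (\<Prod>i\<in>I - {i0}. y i ^ i) \<le> y i0 ^ i0 * (\<Prod>i\<in>I - {i0}. x i ^ i)"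
    using A B0 by (rule mult_left_mono)
  also have "\<dots> < x i0 ^ i0 * (\<Prod>i\<in>I - {i0}. x i ^ i)"
    using B Apos by simp
  finally show ?thesis
    using prod.remove[OF fin i0(1), of "\<lambda>i. y i ^ i"] prod.remove[OF fin i0(1), of "\<lambda>i. x i ^ i"] by simp
qed

lemma side:
  fixes R :: "int poly" and rs :: "nat \<Rightarrow> int poly" and i0 :: nat and \<alpha> a b :: real
  assumes fac: "sqf_factorization R rs"
    and i0: "i0 \<in> {1..degree R}"
    and root: "poly (map_poly of_int (rs i0)) \<alpha> = 0"
    and adm: "admissible_interval R rs i0 \<alpha> a b"
  shows "\<forall>z\<in>iso_disc a b. poly (of_int_poly R :: complex poly) z = 0 \<longrightarrow> z = complex_of_real \<alpha>"
    and "\<forall>z\<in>frontier (iso_disc a b). cmod (poly (of_int_poly R :: complex poly) z) > iso_bound R i0 a b"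
proof -
  define m where "m = (a+b)/2"
  define r where "r = (b-a)/2"
  define cm where "cm = complex_of_real m"
  define I where "I = {1..degree R}"
  define Pc where "Pc i = (of_int_poly (rs i) :: complex poly)" for i
  from adm have ab: "a < \<alpha>" "\<alpha> < b"
    and T0: "T_test (pderiv (rs i0)) (3/2) m (8 * r)"
    and Ti: "\<And>i. i \<in> I \<Longrightarrow> i \<noteq> i0 \<Longrightarrow> T_test (rs i) 1 m (8 * r)"
    unfolding admissible_interval_def m_def r_def I_def by auto
  have r: "r > 0" using ab unfolding r_def by simp
  have am: "cmod (complex_of_real \<alpha> - cm) < r"
  proof -
    have "complex_of_real \<alpha> - cm = complex_of_real (\<alpha> - m)" by (simp add: cm_def)
    then have "cmod (complex_of_real \<alpha> - cm) = \<bar>\<alpha> - m\<bar>" by (simp only: norm_of_real)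
    moreover have "\<bar>\<alpha> - m\<bar> < r" using ab unfolding m_def r_def by (simp add: abs_less_iff field_simps)
    ultimately show ?thesis by simp
  qed
  have Rprod: "R = (\<Prod>i\<in>I. rs i ^ i)" using fac unfolding sqf_factorization_def I_def by simp
  have R0: "R \<noteq> 0" using i0 by auto
  have rs0: "rs i \<noteq> 0" if "i \<in> I" for i
    using R0 that unfolding Rprod by (auto simp: I_def)
  have finI: "finite I" "i0 \<in> I" using i0 unfolding I_def by auto
  have polyR: "poly (of_int_poly R :: complex poly) z = (\<Prod>i\<in>I. poly (Pc i) z ^ i)" for z
    unfolding Rprod of_int_poly_hom.hom_prod of_int_poly_hom.hom_power poly_prod poly_power Pc_def ..
  have degR: "degree R = (\<Sum>i\<in>I. i * degree (rs i))"
    unfolding Rprod using rs0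
    by (subst degree_prod_sum_eq) (auto simp: degree_power_eq intro!: sum.cong)
  have degPc: "degree (Pc i) = degree (rs i)" for i
    unfolding Pc_def by (simp add: of_int_hom.degree_map_poly_hom)
  have NR: "poly (Pc i) z \<noteq> 0"
    and NRb: "cmod (w - cm) \<le> 2*r \<Longrightarrow> cmod (poly (Pc i) z) \<ge> (1/2)^degree (rs i) * cmod (poly (Pc i) w)"
    if "i \<in> I" "i \<noteq> i0" "cmod (z - cm) \<le> 2*r" for i z w
  proof -
    have T: "cmod (poly (Pc i) cm) - (\<Sum>k\<in>{1..degree (Pc i)}. cmod (poly ((pderiv^^k) (Pc i)) cm / fact k) * (8*r)^k) > 0"
      using Ti[OF that(1,2)] unfolding T_complex Pc_def cm_def by simp
    show "poly (Pc i) z \<noteq> 0" using nonroot_facts(1)[OF _ T that(3)] r by simp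
    show "cmod (w - cm) \<le> 2*r \<Longrightarrow> cmod (poly (Pc i) z) \<ge> (1/2)^degree (rs i) * cmod (poly (Pc i) w)"
      using nonroot_facts(2)[OF _ T that(3)] r by (simp add: degPc)
  qed
  have P0root: "poly (Pc i0) (complex_of_real \<alpha>) = 0"
    unfolding Pc_def poly_pc_real root by simp
  have P0deg: "degree (Pc i0) \<ge> 1"
  proof (rule ccontr)
    assume "\<not> 1 \<le> degree (Pc i0)"
    then have "degree (rs i0) = 0" by (simp add: degPc)
    then obtain c where "rs i0 = [:c:]" by (meson degree_eq_zeroE)
    then show False using rs0[OF finI(2)] root by simp
  qed
  have T0c: "cmod (poly (pderiv (Pc i0)) cm) - 3/2 * (\<Sum>j\<in>{1..degree (pderiv (Pc i0))}. cmod (poly ((pderiv^^j) (pderiv (Pc i0))) cm / fact j) * (8*r)^j) > 0"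
    using T0 unfolding T_complex Pc_def cm_def of_int_hom.map_poly_pderiv .
  note RF = root_facts[OF r P0deg P0root am T0c]
  show "\<forall>z\<in>iso_disc a b. poly (of_int_poly R :: complex poly) z = 0 \<longrightarrow> z = complex_of_real \<alpha>"
  proof (intro ballI impI)
    fix z assume zd: "z \<in> iso_disc a b" and z0: "poly (of_int_poly R :: complex poly) z = 0"
    have zm: "cmod (z - cm) \<le> 2*r" using zd unfolding iso_disc_def cm_def m_def r_def
      by (simp add: dist_norm norm_minus_commute)
    from z0 obtain i where i: "i \<in> I" "poly (Pc i) z = 0" unfolding polyR
      using finI(1) by (auto simp: prod_zero_iff)
    then have "i = i0" using NR[OF _ _ zm] by blast
    then show "z = complex_of_real \<alpha>" using RF(1)[OF zm] i by simp
  qed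
  show "\<forall>z\<in>frontier (iso_disc a b). cmod (poly (of_int_poly R :: complex poly) z) > iso_bound R i0 a b"
  proof
    fix z assume "z \<in> frontier (iso_disc a b)"
    then have zm: "cmod (z - cm) = 2*r" using r unfolding iso_disc_def cm_def m_def r_def
      by (simp add: frontier_ball dist_norm norm_minus_commute)
    define w where "w = complex_of_real (m - 2*r)"
    have wm: "cmod (w - cm) \<le> 2*r"
    proof -
      have "w - cm = complex_of_real (- (2*r))" by (simp add: w_def cm_def)
      then show ?thesis using r by (simp only: norm_of_real)
    qed
    define x where "x i = cmod (poly (Pc i) z)" for i
    define y where "y i = (1/2)^(degree (rs i) + (if i = i0 then 1 else 0)) * cmod (poly (Pc i) w)" for i
    have "(\<Prod>i\<in>I. y i ^ i) < (\<Prod>i\<in>I. x i ^ i)"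
    proof (rule prod_strict[OF finI(1) finI(2)])
      show "1 \<le> i0" using i0 by simp
      show "\<And>i. i \<in> I \<Longrightarrow> 0 \<le> y i" unfolding y_def by simp
      show "\<And>i. i \<in> I \<Longrightarrow> i \<noteq> i0 \<Longrightarrow> y i \<le> x i \<and> 0 < x i"
        using NR NRb zm wm unfolding x_def y_def by auto
      show "y i0 < x i0" using RF(2)[OF zm wm] unfolding x_def y_def by (simp add: degPc)
    qed
    also have "(\<Prod>i\<in>I. x i ^ i) = cmod (poly (of_int_poly R :: complex poly) z)"
      unfolding x_def polyR by (simp add: prod_norm[symmetric] norm_power)
    also have "(\<Prod>i\<in>I. y i ^ i) = (\<Prod>i\<in>I. ((1/2)^(degree (rs i) + (if i = i0 then 1 else 0)))^i) * (\<Prod>i\<in>I. cmod (poly (Pc i) w) ^ i)"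
      unfolding y_def power_mult_distrib prod.distrib ..
    also have "(\<Prod>i\<in>I. cmod (poly (Pc i) w) ^ i) = cmod (poly (of_int_poly R :: complex poly) w)"
      unfolding polyR by (simp add: prod_norm[symmetric] norm_power)
    also have "\<dots> = \<bar>poly (of_int_poly R) (m - 2*r)\<bar>"
      unfolding w_def poly_pc_real norm_of_real ..
    also have "(\<Prod>i\<in>I. ((1/2::real)^(degree (rs i) + (if i = i0 then 1 else 0)))^i)
        = (1/2)^(\<Sum>i\<in>I. (degree (rs i) + (if i = i0 then 1 else 0)) * i)"
      by (simp add: power_mult[symmetric] power_sum)
    also have "(\<Sum>i\<in>I. (degree (rs i) + (if i = i0 then 1 else 0)) * i) = i0 + degree R"
    proof -
      have "(\<Sum>i\<in>I. (degree (rs i) + (if i = i0 then 1 else 0)) * i)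
          = (\<Sum>i\<in>I. i * degree (rs i)) + (\<Sum>i\<in>I. (if i = i0 then i else 0))"
        unfolding sum.distrib[symmetric] by (rule sum.cong) auto
      also have "(\<Sum>i\<in>I. (if i = i0 then i else 0)) = i0"
        using finI by (simp add: sum.delta)
      finally show ?thesis using degR by simp
    qed
    finally show "cmod (poly (of_int_poly R :: complex poly) z) > iso_bound R i0 a b"
      unfolding iso_bound_def m_def r_def by (simp add: power_one_over inverse_eq_divide)
  qed
qed

lemma poly_sum_upto:
  fixes F :: "'a::comm_semiring_1 poly"
  assumes "degree F < L"
  shows "poly F t = (\<Sum>k<L. coeff F k * t^k)"
proof -
  have "poly F t = (\<Sum>k\<le>degree F. coeff F k * t^k)" by (rule poly_altdef)
  also have "\<dots> = (\<Sum>k<L. coeff F k * t^k)"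
    by (rule sum.mono_neutral_left) (use assms in \<open>auto simp: coeff_eq_0\<close>)
  finally show ?thesis .
qed

lemma rev_sum: "(\<Sum>j<L. f (L - 1 - j)) = (\<Sum>k<(L::nat). f k)"
proof -
  have "(\<Sum>j<L. f (L - 1 - j)) = (\<Sum>j<L. f (L - Suc j))" by simp
  also have "\<dots> = (\<Sum>k<L. f k)" by (rule sum.nat_diff_reindex)
  finally show ?thesis .
qed

lemma sylv_det_zero:
  fixes p q :: "complex poly"
  assumes mn: "m + n > 0" and dp: "degree p \<le> m" and dq: "degree q \<le> n"
    and pt: "poly p t = 0" and qt: "poly q t = 0"
  shows "det (sylvester_mat_sub m n p q) = 0"
proof -
  define L where "L = m + n"
  define A where "A = sylvester_mat_sub m n p q"
  define v where "v = vec L (\<lambda>j. t^(L - 1 - j))"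
  have A: "A \<in> carrier_mat L L" unfolding A_def L_def by auto
  have v: "v \<in> carrier_vec L" unfolding v_def by simp
  have v0: "v \<noteq> 0\<^sub>v L"
  proof
    assume "v = 0\<^sub>v L"
    then have "v $ (L - 1) = 0" using mn unfolding L_def by simp
    then show False using mn unfolding v_def L_def by simp
  qed
  have entry: "A $$ (i, j) = (if i < n then coeff (monom 1 (n - 1 - i) * p) (L - 1 - j)
      else coeff (monom 1 (L - 1 - i) * q) (L - 1 - j))" if i: "i < L" and j: "j < L" for i j
  proof -
    have e: "A $$ (i, j) = (if i < n then
       if i \<le> j \<and> j - i \<le> m then coeff p (m + i - j) else 0
     else if i - n \<le> j \<and> j \<le> i then coeff q (i-j) else 0)"
      unfolding A_def using i j unfolding L_def by (rule sylvester_mat_sub_index)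
    show ?thesis
    proof (cases "i < n")
      case True
      have "coeff (monom 1 (n - 1 - i) * p) (L - 1 - j) = (if i \<le> j \<and> j - i \<le> m then coeff p (m + i - j) else 0)"
        unfolding coeff_monom_mult using True i j dp
        by (auto simp: L_def coeff_eq_0 not_le intro!: arg_cong[where f="coeff p"])
      then show ?thesis using e True by simp
    next
      case False
      have "coeff (monom 1 (L - 1 - i) * q) (L - 1 - j) = (if i - n \<le> j \<and> j \<le> i then coeff q (i - j) else 0)"
        unfolding coeff_monom_mult using False i j dq
        by (auto simp: L_def coeff_eq_0 not_le intro!: arg_cong[where f="coeff q"])
      then show ?thesis using e False by simp
    qed
  qed
  have rowsum: "(\<Sum>j<L. coeff F (L - 1 - j) * t^(L - 1 - j)) = poly F t" if "degree F < L" for F :: "complex poly"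
    using rev_sum[of "\<lambda>k. coeff F k * t^k" L] poly_sum_upto[OF that, of t] by simp
  have Av: "A *\<^sub>v v = 0\<^sub>v L"
  proof (rule eq_vecI)
    show "dim_vec (A *\<^sub>v v) = dim_vec (0\<^sub>v L)" using A by simp
    fix i assume "i < dim_vec (0\<^sub>v L)"
    then have i: "i < L" by simp
    define F where "F = (if i < n then monom 1 (n - 1 - i) * p else monom 1 (L - 1 - i) * q)"
    have dF: "degree F < L"
    proof -
      have "degree (monom (1::complex) k * r) \<le> k + degree r" for k r
        using degree_mult_le[of "monom (1::complex) k" r] by (simp add: degree_monom_eq)
      then show ?thesis unfolding F_def using i dp dq mn
        by (cases "i < n") (fastforce simp: L_def intro: le_less_trans)+
    qed
    have "(A *\<^sub>v v) $ i = scalar_prod (Matrix.row A i) v"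
      using A i by (simp add: index_mult_mat_vec)
    also have "\<dots> = (\<Sum>j<L. coeff F (L - 1 - j) * t^(L - 1 - j))"
      unfolding scalar_prod_def using A i
      by (auto simp: v_def entry F_def lessThan_atLeast0 intro!: sum.cong)
    also have "\<dots> = poly F t" by (rule rowsum[OF dF])
    also have "\<dots> = 0" unfolding F_def using pt qt by (simp add: poly_monom)
    finally show "(A *\<^sub>v v) $ i = 0\<^sub>v L $ i" using i by simp
  qed
  show ?thesis
    unfolding A_def[symmetric] det_0_iff_vec_prod_zero[OF A] using v v0 Av by blast
qed

lemma ev_hom: "comm_ring_hom (\<lambda>c::int poly. poly (of_int_poly c :: complex poly) z1)"
  by unfold_locales (simp_all add: of_int_poly_hom.hom_add of_int_poly_hom.hom_mult)

lemma res_zero: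
  fixes f g :: "int poly poly"
  assumes f0: "eval2 f z1 z2 = 0" and g0: "eval2 g z1 z2 = 0" and deg: "degree (resultant f g) \<ge> 1"
  shows "poly (of_int_poly (resultant f g) :: complex poly) z1 = 0"
proof -
  define h where "h = (\<lambda>c::int poly. poly (of_int_poly c :: complex poly) z1)"
  interpret h: comm_ring_hom h unfolding h_def by (rule ev_hom)
  have mn: "degree f + degree g > 0"
  proof (rule ccontr)
    assume "\<not> 0 < degree f + degree g"
    then have "sylvester_mat f g \<in> carrier_mat 0 0" using sylvester_carrier_mat[of f g] by simp
    then have "resultant f g = 1" unfolding resultant_def by (rule det_dim_zero)
    then show False using deg by simp
  qed
  have "poly (of_int_poly (resultant f g) :: complex poly) z1 = h (resultant f g)" unfolding h_def ..
  also have "\<dots> = det (map_mat h (sylvester_mat_sub (degree f) (degree g) f g))"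
    unfolding resultant_def sylvester_mat_def by (rule h.hom_det[symmetric])
  also have "map_mat h (sylvester_mat_sub (degree f) (degree g) f g) = sylvester_mat_sub (degree f) (degree g) (map_poly h f) (map_poly h g)"
    by (rule sylvester_mat_sub_map) simp
  also have "det \<dots> = 0"
    by (rule sylv_det_zero[OF mn degree_map_poly_le degree_map_poly_le, of _ z2])
       (use f0 g0 in \<open>simp_all add: eval2_def h_def\<close>)
  finally show ?thesis .
qed

lemma eval2_expand:
  "eval2 F x y = (\<Sum>i\<le>degree F. (\<Sum>j\<le>degree (coeff F i). of_int (coeff (coeff F i) j) * x^j) * y^i)"
proof -
  define h where "h = (\<lambda>c::int poly. poly (of_int_poly c :: complex poly) x)"
  have "eval2 F x y = poly (map_poly h F) y" unfolding eval2_def h_def ..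
  also have "\<dots> = (\<Sum>i<Suc (degree F). coeff (map_poly h F) i * y^i)"
    by (rule poly_sum_upto) (use degree_map_poly_le[of h F] in simp)
  also have "\<dots> = (\<Sum>i\<le>degree F. h (coeff F i) * y^i)"
    unfolding lessThan_Suc_atMost by (simp add: coeff_map_poly h_def)
  also have "\<dots> = (\<Sum>i\<le>degree F. (\<Sum>j\<le>degree (coeff F i). of_int (coeff (coeff F i) j) * x^j) * y^i)"
    unfolding h_def poly_altdef by (simp add: of_int_hom.degree_map_poly_hom coeff_map_poly)
  finally show ?thesis .
qed

lemma eval2_add: "eval2 (A + B) x y = eval2 A x y + eval2 B x y"
proof -
  interpret h: comm_ring_hom "\<lambda>c::int poly. poly (of_int_poly c :: complex poly) x" by (rule ev_hom)
  show ?thesis unfolding eval2_def h.map_poly_hom_add poly_add ..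
qed

lemma eval2_sum: "finite A \<Longrightarrow> eval2 (\<Sum>a\<in>A. F a) x y = (\<Sum>a\<in>A. eval2 (F a) x y)"
  by (induction A rule: finite_induct) (simp_all add: eval2_add, simp add: eval2_def)

lemma eval2_monom: "eval2 (monom (monom c i) j) x y = of_int c * x^i * y^j"
  unfolding eval2_def by (simp add: map_poly_monom poly_monom)

lemma eval2_swap: "eval2 (swap_xy f) z2 z1 = eval2 f z1 z2"
proof -
  have "eval2 (swap_xy f) z2 z1 = (\<Sum>i\<le>degree f. \<Sum>j\<le>degree (coeff f i). eval2 (monom (monom (coeff (coeff f i) j) i) j) z2 z1)"
    unfolding swap_xy_def by (simp only: eval2_sum finite_atMost)
  also have "\<dots> = (\<Sum>i\<le>degree f. \<Sum>j\<le>degree (coeff f i). of_int (coeff (coeff f i) j) * z1^j * z2^i)"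
    by (simp only: eval2_monom mult_ac)
  also have "\<dots> = eval2 f z1 z2"
    unfolding eval2_expand[of f z1 z2] by (simp only: sum_distrib_right)
  finally show ?thesis .
qed


theorem theorem3:
  fixes f g :: "int poly poly" and rs ss :: "nat \<Rightarrow> int poly"
    and i0 j0 :: nat and \<alpha> \<beta> a b c d :: real
  assumes no_common: "\<And>h. h dvd f \<Longrightarrow> h dvd g \<Longrightarrow> degree h = 0 \<and> degree (coeff h 0) = 0"
    and fact_y: "sqf_factorization (res_y f g) rs"
    and fact_x: "sqf_factorization (res_x f g) ss"
    and i0: "i0 \<in> {1..degree (res_y f g)}"
    and \<alpha>_root: "poly (map_poly of_int (rs i0)) \<alpha> = 0"
    and I_\<alpha>: "admissible_interval (res_y f g) rs i0 \<alpha> a b"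
    and j0: "j0 \<in> {1..degree (res_x f g)}"
    and \<beta>_root: "poly (map_poly of_int (ss j0)) \<beta> = 0"
    and I_\<beta>: "admissible_interval (res_x f g) ss j0 \<beta> c d"
  shows "(\<forall>p\<in>{(z1, z2). z1 \<in> iso_disc a b \<and> z2 \<in> iso_disc c d
                         \<and> eval2 f z1 z2 = 0 \<and> eval2 g z1 z2 = 0}.
            \<forall>q\<in>{(z1, z2). z1 \<in> iso_disc a b \<and> z2 \<in> iso_disc c d
                         \<and> eval2 f z1 z2 = 0 \<and> eval2 g z1 z2 = 0}. p = q)
       \<and> (\<forall>z1 z2. z1 \<in> iso_disc a b \<and> z2 \<in> iso_disc c d
                  \<and> eval2 f z1 z2 = 0 \<and> eval2 g z1 z2 = 0
                  \<longrightarrow> z1 = complex_of_real \<alpha> \<and> z2 = complex_of_real \<beta>)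
       \<and> (\<forall>z1\<in>frontier (iso_disc a b).
            cmod (poly (map_poly of_int (res_y f g)) z1) > iso_bound (res_y f g) i0 a b)
       \<and> (\<forall>z2\<in>frontier (iso_disc c d).
            cmod (poly (map_poly of_int (res_x f g)) z2) > iso_bound (res_x f g) j0 c d)"
  proof -
  note Y = side[OF fact_y i0 \<alpha>_root I_\<alpha>]
  note X = side[OF fact_x j0 \<beta>_root I_\<beta>]
  have key: "\<forall>z1 z2. z1 \<in> iso_disc a b \<and> z2 \<in> iso_disc c d
                  \<and> eval2 f z1 z2 = 0 \<and> eval2 g z1 z2 = 0
                  \<longrightarrow> z1 = complex_of_real \<alpha> \<and> z2 = complex_of_real \<beta>"
  proof (intro allI impI)
    fix z1 z2 assume H: "z1 \<in> iso_disc a b \<and> z2 \<in> iso_disc c d \<and> eval2 f z1 z2 = 0 \<and> eval2 g z1 z2 = 0"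
    have dy: "degree (resultant f g) \<ge> 1" using i0 unfolding res_y_def by simp
    have dx: "degree (resultant (swap_xy f) (swap_xy g)) \<ge> 1" using j0 unfolding res_x_def by simp
    have z1d: "z1 \<in> iso_disc a b" and z2d: "z2 \<in> iso_disc c d"
      and fz: "eval2 f z1 z2 = 0" and gz: "eval2 g z1 z2 = 0" using H by simp_all
    have "poly (of_int_poly (resultant f g) :: complex poly) z1 = 0"
      by (rule res_zero[OF fz gz dy])
    then have r1: "poly (of_int_poly (res_y f g) :: complex poly) z1 = 0"
      unfolding res_y_def .
    have 1: "z1 = complex_of_real \<alpha>" by (rule mp[OF bspec[OF Y(1) z1d] r1])
    have fz': "eval2 (swap_xy f) z2 z1 = 0" using fz by (simp only: eval2_swap)
    have gz': "eval2 (swap_xy g) z2 z1 = 0" using gz by (simp only: eval2_swap)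
    have "poly (of_int_poly (resultant (swap_xy f) (swap_xy g)) :: complex poly) z2 = 0"
      by (rule res_zero[OF fz' gz' dx])
    then have r2: "poly (of_int_poly (res_x f g) :: complex poly) z2 = 0"
      unfolding res_x_def .
    have 2: "z2 = complex_of_real \<beta>" by (rule mp[OF bspec[OF X(1) z2d] r2])
    show "z1 = complex_of_real \<alpha> \<and> z2 = complex_of_real \<beta>" using 1 2 by simp
  qed
  have part1: "\<forall>p\<in>{(z1, z2). z1 \<in> iso_disc a b \<and> z2 \<in> iso_disc c d
                         \<and> eval2 f z1 z2 = 0 \<and> eval2 g z1 z2 = 0}.
            \<forall>q\<in>{(z1, z2). z1 \<in> iso_disc a b \<and> z2 \<in> iso_disc c d
                         \<and> eval2 f z1 z2 = 0 \<and> eval2 g z1 z2 = 0}. p = q"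
  proof (intro ballI)
    fix p q
    assume p: "p \<in> {(z1, z2). z1 \<in> iso_disc a b \<and> z2 \<in> iso_disc c d
                         \<and> eval2 f z1 z2 = 0 \<and> eval2 g z1 z2 = 0}"
      and q: "q \<in> {(z1, z2). z1 \<in> iso_disc a b \<and> z2 \<in> iso_disc c d
                         \<and> eval2 f z1 z2 = 0 \<and> eval2 g z1 z2 = 0}"
    obtain p1 p2 where pp: "p = (p1, p2)" by (cases p)
    obtain q1 q2 where qq: "q = (q1, q2)" by (cases q)
    have "p1 = complex_of_real \<alpha> \<and> p2 = complex_of_real \<beta>"
      using key p unfolding pp by simp
    moreover have "q1 = complex_of_real \<alpha> \<and> q2 = complex_of_real \<beta>"
      using key q unfolding qq by simp
    ultimately show "p = q" unfolding pp qq by simp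
  qed
  show ?thesis by (rule conjI[OF part1 conjI[OF key conjI[OF Y(2) X(2)]]])
qed

end
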